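(* Let $T_1(z),\dots,T_M(z)$ be holomorphic functions in a neighborhood of $0\in\mathbf C$, not all identically zero, and let $q_1,\dots,q_M$ be real numbers. Then there exist a neighborhood $\mathcal O$ of $0$ and a constant $C$ such that $$\Big|\partial_z\partial_{\bar z}\ln\Big(\sum_{l=1}^M\epsilon^{2q_l}|T_l(z)|^2\Big)\Big|\le\frac{C}{|z|^2}$$ for all $z\in\mathcal O\setminus\{0\}$ and all $\epsilon>0$. *)

theory Defs
  imports "HOL-Analysis.Analysis"
begin

definition dx :: "(complex \<Rightarrow> real) \<Rightarrow> complex \<Rightarrow> real" where
  "dx f z = deriv (\<lambda>t. f (z + of_real t)) 0"

definition dy :: "(complex \<Rightarrow> real) \<Rightarrow> complex \<Rightarrow> real" where
  "dy f z = deriv (\<lambda>t. f (z + \<i> * of_real t)) 0"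

text \<open>The operator \<open>\<partial>_z \<partial>_{\<bar>z\<bar>} = (1/4)(\<partial>_x\<^sup>2 + \<partial>_y\<^sup>2)\<close> on real-valued functions.\<close>
definition ddbar :: "(complex \<Rightarrow> real) \<Rightarrow> complex \<Rightarrow> real" where
  "ddbar f z = (dx (dx f) z + dy (dy f) z) / 4"

end

theory Submission
  imports Defs "HOL-Complex_Analysis.Complex_Analysis"
begin

lemma dir_deriv:
  fixes g :: "complex \<Rightarrow> real"
  assumes "(g has_derivative D) (at w)"
  shows "deriv (\<lambda>t. g (w + of_real t * e)) 0 = D e"
proof -
  have l: "linear D" using assms has_derivative_linear by blast
  have 1: "((\<lambda>t::real. w + of_real t * e) has_derivative (\<lambda>s. of_real s * e)) (at 0)"
    by (auto intro!: derivative_eq_intros)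
  have 2: "(g has_derivative D) (at ((\<lambda>t::real. w + of_real t * e) 0))" using assms by simp
  have "((\<lambda>t. g (w + of_real t * e)) has_derivative (\<lambda>s. D (of_real s * e))) (at 0)"
    using has_derivative_compose[OF 1 2] by (simp add: o_def)
  moreover have "(\<lambda>s. D (of_real s * e)) = (\<lambda>s. s * D e)"
  proof
    fix s :: real
    have "D (of_real s * e) = D (s *\<^sub>R e)" by (simp add: scaleR_conv_of_real)
    also have "\<dots> = s *\<^sub>R D e" using l by (simp add: linear_scale)
    finally show "D (of_real s * e) = s * D e" by simp
  qed
  ultimately have "((\<lambda>t. g (w + of_real t * e)) has_field_derivative D e) (at 0)"
    by (simp add: has_field_derivative_def mult_commute_abs)
  thus ?thesis by (rule DERIV_imp_deriv)
qed

lemma dx_eq: "(g has_derivative D) (at w) \<Longrightarrow> dx g w = D 1"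
  using dir_deriv[of g D w 1] by (simp add: dx_def)

lemma dy_eq: "(g has_derivative D) (at w) \<Longrightarrow> dy g w = D \<i>"
  using dir_deriv[of g D w \<i>] by (simp add: dy_def mult.commute)

lemma dir_cong:
  fixes g1 g2 :: "complex \<Rightarrow> real"
  assumes "open V" "z \<in> V" "\<And>w. w \<in> V \<Longrightarrow> g1 w = g2 w"
  shows "deriv (\<lambda>t. g1 (z + of_real t * e)) 0 = deriv (\<lambda>t. g2 (z + of_real t * e)) 0"
proof (rule deriv_cong_ev[OF _ refl])
  have "((\<lambda>t::real. z + of_real t * e) \<longlongrightarrow> z) (nhds 0)"
    by (auto intro!: tendsto_eq_intros filterlim_ident)
  from topological_tendstoD[OF this assms(1,2)]
  have "\<forall>\<^sub>F t in nhds 0. (z + of_real t * e) \<in> V" .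
  thus "\<forall>\<^sub>F t in nhds 0. g1 (z + of_real t * e) = g2 (z + of_real t * e)"
    by eventually_elim (use assms(3) in auto)
qed

lemma dx_cong: "open V \<Longrightarrow> z \<in> V \<Longrightarrow> (\<And>w. w \<in> V \<Longrightarrow> g1 w = g2 w) \<Longrightarrow> dx g1 z = dx g2 z"
  using dir_cong[of V z g1 g2 1] by (simp add: dx_def)

lemma dy_cong: "open V \<Longrightarrow> z \<in> V \<Longrightarrow> (\<And>w. w \<in> V \<Longrightarrow> g1 w = g2 w) \<Longrightarrow> dy g1 z = dy g2 z"
  using dir_cong[of V z g1 g2 \<i>] by (simp add: dy_def mult.commute)

lemma factor_bound:
  fixes g T :: "complex \<Rightarrow> complex"
  assumes rho: "\<rho> > 0" and gh: "g holomorphic_on ball 0 \<rho>" and gnz: "\<And>w. w \<in> ball 0 \<rho> \<Longrightarrow> g w \<noteq> 0"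
    and Teq: "\<And>w. w \<in> ball 0 \<rho> \<Longrightarrow> T w = w^n * g w"
  shows "\<exists>K\<ge>0. \<forall>w\<in>ball 0 (\<rho>/2). cmod w * cmod (deriv T w) \<le> K * cmod (T w)"
proof -
  have dT: "deriv T w = of_nat n * w^(n-1) * g w + w^n * deriv g w" if w: "w \<in> ball 0 \<rho>" for w
  proof -
    have "(g has_field_derivative deriv g w) (at w)" using holomorphic_derivI[OF gh _ w] by simp
    hence "((\<lambda>w. w^n * g w) has_field_derivative (of_nat n * w^(n-1) * g w + w^n * deriv g w)) (at w)"
      by (auto intro!: derivative_eq_intros)
    hence "(T has_field_derivative (of_nat n * w^(n-1) * g w + w^n * deriv g w)) (at w)"
      by (rule has_field_derivative_transform_within_open[OF _ open_ball w]) (use Teq in auto)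
    thus ?thesis by (rule DERIV_imp_deriv)
  qed
  define h where "h w = cmod (of_nat n * g w + w * deriv g w) / cmod (g w)" for w
  have sub: "cball 0 (\<rho>/2) \<subseteq> ball 0 \<rho>" using rho by auto
  have dgh: "deriv g holomorphic_on ball 0 \<rho>" using holomorphic_deriv[OF gh] by simp
  have "continuous_on (cball 0 (\<rho>/2)) h"
    unfolding h_def
    using sub gnz
    by (intro continuous_intros continuous_on_subset[OF holomorphic_on_imp_continuous_on[OF gh] sub]
          continuous_on_subset[OF holomorphic_on_imp_continuous_on[OF dgh] sub]) auto
  hence "compact (h ` cball 0 (\<rho>/2))" by (intro compact_continuous_image) auto
  hence "bounded (h ` cball 0 (\<rho>/2))" by (rule compact_imp_bounded)
  then obtain K where K: "K > 0" "\<And>w. w \<in> cball 0 (\<rho>/2) \<Longrightarrow> norm (h w) \<le> K"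
    unfolding bounded_pos by auto
  show ?thesis
  proof (intro exI[of _ K] conjI ballI)
    show "K \<ge> 0" using K by simp
    fix w :: complex assume w: "w \<in> ball 0 (\<rho>/2)"
    hence wb: "w \<in> ball 0 \<rho>" and wc: "w \<in> cball 0 (\<rho>/2)" using rho by auto
    have e1: "w * (of_nat n * w^(n-1)) = of_nat n * w^n" by (cases n) auto
    have "w * deriv T w = w^n * (of_nat n * g w + w * deriv g w)"
    proof -
      have "w * deriv T w = (w * (of_nat n * w^(n-1))) * g w + (w * w^n) * deriv g w"
        using dT[OF wb] by (simp add: distrib_left mult.assoc)
      also have "\<dots> = w^n * (of_nat n * g w + w * deriv g w)" unfolding e1
        by (simp add: distrib_left mult.commute mult.left_commute)
      finally show ?thesis .
    qed
    hence "cmod w * cmod (deriv T w) = cmod (w^n) * cmod (of_nat n * g w + w * deriv g w)"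
      by (metis norm_mult)
    also have "cmod (of_nat n * g w + w * deriv g w) = h w * cmod (g w)"
      using gnz[OF wb] by (simp add: h_def)
    also have "cmod (w^n) * (h w * cmod (g w)) \<le> cmod (w^n) * (K * cmod (g w))"
      using K(2)[OF wc] by (intro mult_left_mono mult_right_mono) auto
    also have "\<dots> = K * cmod (T w)" using Teq[OF wb] by (simp add: norm_mult)
    finally show "cmod w * cmod (deriv T w) \<le> K * cmod (T w)" .
  qed
qed

lemma key:
  fixes T :: "complex \<Rightarrow> complex"
  assumes r: "r > 0" and h: "T holomorphic_on ball 0 r"
  shows "\<exists>\<delta> K. 0 < \<delta> \<and> \<delta> \<le> r \<and> K \<ge> 0 \<and>
     (\<forall>w\<in>ball 0 \<delta>. cmod w * cmod (deriv T w) \<le> K * cmod (T w)) \<and>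
     ((\<exists>z\<in>ball 0 r. T z \<noteq> 0) \<longrightarrow> (\<forall>w\<in>ball 0 \<delta> - {0}. T w \<noteq> 0))"
proof (cases "T constant_on ball 0 r")
  case True
  then obtain c where c: "\<And>x. x \<in> ball 0 r \<Longrightarrow> T x = c" unfolding constant_on_def by blast
  have d0: "deriv T w = 0" if w: "w \<in> ball 0 r" for w
  proof -
    have "((\<lambda>_. c) has_field_derivative 0) (at w)" by simp
    hence "(T has_field_derivative 0) (at w)"
      by (rule has_field_derivative_transform_within_open[OF _ open_ball w]) (use c in auto)
    thus ?thesis by (rule DERIV_imp_deriv)
  qed
  show ?thesis
    by (intro exI[of _ r] exI[of _ 0]) (use r c d0 in auto)
next
  case nc: False
  show ?thesis
  proof (cases "T 0 = 0")
    case True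
    have z0: "0 \<in> ball (0::complex) r" using r by simp
    have "\<exists>g \<rho> n. 0 < n \<and> 0 < \<rho> \<and> ball (0::complex) \<rho> \<subseteq> ball 0 r \<and> g holomorphic_on ball (0::complex) \<rho> \<and>
       (\<forall>w\<in>ball (0::complex) \<rho>. T w = (w - 0)^n * g w) \<and> (\<forall>w\<in>ball (0::complex) \<rho>. g w \<noteq> 0)"
      apply (rule holomorphic_factor_zero_nonconstant[OF h open_ball connected_ball z0 True nc])
      apply (rule exI)+
      apply (intro conjI ballI)
      apply assumption+
      done
    then obtain g :: "complex \<Rightarrow> complex" and \<rho> :: real and n :: nat where "0 < n" and rho: "0 < \<rho>" and sub: "ball (0::complex) \<rho> \<subseteq> ball 0 r"
      and gh: "g holomorphic_on ball (0::complex) \<rho>" and Teq0: "\<forall>w\<in>ball (0::complex) \<rho>. T w = (w - 0)^n * g w"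
      and gnz0: "\<forall>w\<in>ball (0::complex) \<rho>. g w \<noteq> 0" by blast
    have Teq: "\<And>w. w \<in> ball (0::complex) \<rho> \<Longrightarrow> T w = w^n * g w" using Teq0 by simp
    have gnz: "\<And>w. w \<in> ball (0::complex) \<rho> \<Longrightarrow> g w \<noteq> 0" using gnz0 by blast
    have rr: "\<rho> \<le> r" using sub rho by (simp add: ball_subset_ball_iff)
    obtain K where K: "K \<ge> 0" "\<forall>w\<in>ball 0 (\<rho>/2). cmod w * cmod (deriv T w) \<le> K * cmod (T w)"
      using factor_bound[OF rho gh gnz, of T n] Teq by auto
    show ?thesis
    proof (rule exI[of _ "\<rho>/2"], rule exI[of _ K], intro conjI impI ballI)
      show "K \<ge> 0" by (rule K(1))
      show "\<And>w. w \<in> ball 0 (\<rho>/2) \<Longrightarrow> cmod w * cmod (deriv T w) \<le> K * cmod (T w)" using K(2) by blast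
      show "0 < \<rho>/2" "\<rho>/2 \<le> r" using rho rr by auto
      fix w :: complex assume "w \<in> ball 0 (\<rho>/2) - {0}"
      hence "w \<in> ball (0::complex) \<rho>" "w \<noteq> 0" using rho by auto
      thus "T w \<noteq> 0" using Teq gnz by auto
    qed
  next
    case False
    have "isCont T 0"
      using continuous_on_eq_continuous_at[OF open_ball, of 0 r T] holomorphic_on_imp_continuous_on[OF h] r by simp
    then obtain e where e: "e > 0" "\<And>y. dist 0 y < e \<Longrightarrow> T y \<noteq> 0"
      using continuous_at_avoid[of 0 T 0] False by auto
    define \<rho> where "\<rho> = min e r"
    have rho: "\<rho> > 0" "\<rho> \<le> r" using e r by (auto simp: \<rho>_def)
    have gh: "T holomorphic_on ball (0::complex) \<rho>" using holomorphic_on_subset[OF h subset_ball[OF rho(2)]] .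

    have gnz: "\<And>w. w \<in> ball (0::complex) \<rho> \<Longrightarrow> T w \<noteq> 0" using e by (auto simp: \<rho>_def)
    obtain K where K: "K \<ge> 0" "\<forall>w\<in>ball 0 (\<rho>/2). cmod w * cmod (deriv T w) \<le> K * cmod (T w)"
      using factor_bound[OF rho(1) gh gnz, of T 0] by auto
    show ?thesis
    proof (rule exI[of _ "\<rho>/2"], rule exI[of _ K], intro conjI impI ballI)
      show "K \<ge> 0" by (rule K(1))
      show "\<And>w. w \<in> ball 0 (\<rho>/2) \<Longrightarrow> cmod w * cmod (deriv T w) \<le> K * cmod (T w)" using K(2) by blast
      show "0 < \<rho>/2" "\<rho>/2 \<le> r" using rho by auto
      fix w :: complex assume "w \<in> ball 0 (\<rho>/2) - {0}"
      hence "w \<in> ball (0::complex) \<rho>" using rho by auto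
      thus "T w \<noteq> 0" using gnz by auto
    qed
  qed
qed

lemma hd_cnj: "(f has_derivative f') F \<Longrightarrow> ((\<lambda>x. cnj (f x)) has_derivative (\<lambda>h. cnj (f' h))) F"
  using bounded_linear.has_derivative[OF bounded_linear_cnj] .

lemma hd_Re: "(f has_derivative f') F \<Longrightarrow> ((\<lambda>x. Re (f x)) has_derivative (\<lambda>h. Re (f' h))) F"
  using bounded_linear.has_derivative[OF bounded_linear_Re] .

lemma sq_deriv:
  assumes "(f has_field_derivative d) (at w)"
  shows "((\<lambda>w. (cmod (f w))^2) has_derivative (\<lambda>h. 2 * Re (cnj (f w) * (d * h)))) (at w)"
proof -
  have 1: "(f has_derivative (\<lambda>h. d * h)) (at w)" using assms by (simp add: has_field_derivative_def)
  have "((\<lambda>w. cnj (f w) * f w) has_derivative (\<lambda>h. cnj (f w) * (d*h) + cnj (d*h) * f w)) (at w)"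
    by (rule has_derivative_mult[OF hd_cnj[OF 1] 1])
  then have 2: "((\<lambda>w. Re (cnj (f w) * f w)) has_derivative (\<lambda>h. Re (cnj (f w) * (d*h) + cnj (d*h) * f w))) (at w)"
    by (rule hd_Re)
  have e1: "(\<lambda>w. Re (cnj (f w) * f w)) = (\<lambda>w. (cmod (f w))^2)"
    by (auto simp: cmod_power2 power2_eq_square[of "Re _"] power2_eq_square[of "Im _"])
  have e2: "(\<lambda>h. Re (cnj (f w) * (d*h) + cnj (d*h) * f w)) = (\<lambda>h. 2 * Re (cnj (f w) * (d * h)))"
  proof
    fix h
    show "Re (cnj (f w) * (d*h) + cnj (d*h) * f w) = 2 * Re (cnj (f w) * (d * h))"
      by (simp add: algebra_simps)
  qed
  show ?thesis using 2 unfolding e1 e2 .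
qed

lemma calc:
  fixes T :: "nat \<Rightarrow> complex \<Rightarrow> complex" and a :: "nat \<Rightarrow> real" and I :: "nat set"
  assumes V: "open V" and z: "z \<in> V" and S: "open S" "V \<subseteq> S"
    and hol0: "\<forall>l\<in>I. T l holomorphic_on S"
    and Fpos0: "\<forall>w\<in>V. (\<Sum>l\<in>I. a l * (cmod (T l w))^2) > 0"
  defines "F \<equiv> (\<lambda>w. \<Sum>l\<in>I. a l * (cmod (T l w))^2)"
  defines "N \<equiv> (\<lambda>e w. \<Sum>l\<in>I. a l * (2 * Re (cnj (T l w) * (deriv (T l) w * e))))"
  defines "N2 \<equiv> (\<lambda>e h w. \<Sum>l\<in>I. a l * (2 * Re (cnj (T l w) * (deriv (deriv (T l)) w * h * e)
                + cnj (deriv (T l) w * h) * (deriv (T l) w * e))))"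
  shows "ddbar (\<lambda>w. ln (\<Sum>l\<in>I. a l * (cmod (T l w))^2)) z =
     ((N2 1 1 z + N2 \<i> \<i> z) * inverse (F z) - (N 1 z * (inverse (F z) * N 1 z * inverse (F z)))
       - (N \<i> z * (inverse (F z) * N \<i> z * inverse (F z)))) / 4"
proof -
  note hol = hol0[rule_format] and Fpos = Fpos0[rule_format]
  have dT: "(T l has_field_derivative deriv (T l) w) (at w)" if "l \<in> I" "w \<in> V" for l w
    using holomorphic_derivI[OF hol[OF that(1)] S(1)] that(2) S(2) by auto
  have dT2: "(deriv (T l) has_field_derivative deriv (deriv (T l)) w) (at w)" if "l \<in> I" "w \<in> V" for l w
    using holomorphic_derivI[OF holomorphic_deriv[OF hol[OF that(1)] S(1)] S(1)] that(2) S(2) by auto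
  have dF: "(F has_derivative (\<lambda>h. N h w)) (at w)" if w: "w \<in> V" for w
    unfolding F_def N_def
    by (intro has_derivative_sum has_derivative_mult_right sq_deriv dT w)
  have dg: "((\<lambda>w. ln (F w)) has_derivative (\<lambda>h. N h w * inverse (F w))) (at w)" if w: "w \<in> V" for w
    using DERIV_compose_FDERIV[OF DERIV_ln dF[OF w]] Fpos[OF w] unfolding F_def by auto
  have dN: "((\<lambda>w. N e w) has_derivative (\<lambda>h. N2 e h w)) (at w)" if w: "w \<in> V" for w e
  proof -
    have "((\<lambda>w. cnj (T l w) * (deriv (T l) w * e)) has_derivative
        (\<lambda>h. cnj (T l w) * (deriv (deriv (T l)) w * h * e) + cnj (deriv (T l) w * h) * (deriv (T l) w * e))) (at w)"
      if l: "l \<in> I" for l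
    proof (rule has_derivative_mult[OF hd_cnj has_derivative_mult_left])
      show "(T l has_derivative (\<lambda>h. deriv (T l) w * h)) (at w)"
        using dT[OF l w] by (simp add: has_field_derivative_def)
      show "(deriv (T l) has_derivative (\<lambda>h. deriv (deriv (T l)) w * h)) (at w)"
        using dT2[OF l w] by (simp add: has_field_derivative_def)
    qed
    thus ?thesis unfolding N_def N2_def
      by (intro has_derivative_sum has_derivative_mult_right hd_Re) auto
  qed
  have dG: "((\<lambda>w. N e w * inverse (F w)) has_derivative
      (\<lambda>h. N e w * (- (inverse (F w) * N h w * inverse (F w))) + N2 e h w * inverse (F w))) (at w)"
    if w: "w \<in> V" for w e
    by (rule has_derivative_mult[OF dN[OF w] Deriv.has_derivative_inverse[OF _ dF[OF w]]])
      (use Fpos[OF w] in \<open>simp add: F_def\<close>)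
  have gF: "(\<lambda>w. ln (\<Sum>l\<in>I. a l * (cmod (T l w))^2)) = (\<lambda>w. ln (F w))" by (simp add: F_def)
  have "dx (dx (\<lambda>w. ln (F w))) z = dx (\<lambda>w. N 1 w * inverse (F w)) z"
    by (rule dx_cong[OF V z]) (use dx_eq[OF dg] in auto)
  also have "\<dots> = N 1 z * (- (inverse (F z) * N 1 z * inverse (F z))) + N2 1 1 z * inverse (F z)"
    by (rule dx_eq[OF dG[OF z]])
  finally have X: "dx (dx (\<lambda>w. ln (F w))) z = \<dots>" .
  have "dy (dy (\<lambda>w. ln (F w))) z = dy (\<lambda>w. N \<i> w * inverse (F w)) z"
    by (rule dy_cong[OF V z]) (use dy_eq[OF dg] in auto)
  also have "\<dots> = N \<i> z * (- (inverse (F z) * N \<i> z * inverse (F z))) + N2 \<i> \<i> z * inverse (F z)"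
    by (rule dy_eq[OF dG[OF z]])
  finally have Y: "dy (dy (\<lambda>w. ln (F w))) z = \<dots>" .
  show ?thesis unfolding gF ddbar_def X Y by (simp add: algebra_simps)
qed

lemma aux_bound: "0\<le>s \<Longrightarrow> s \<le> 4*Y \<Longrightarrow> a \<le> 4*Y \<Longrightarrow> b \<le> 4*Y \<Longrightarrow> 0 \<le> a \<Longrightarrow> 0 \<le> b \<Longrightarrow> \<bar>(s-a-b)/4\<bar> \<le> 3*(Y::real)"
  by (simp add: abs_le_iff)

lemma final_bound:
  fixes T :: "nat \<Rightarrow> complex \<Rightarrow> complex" and a :: "nat \<Rightarrow> real" and I :: "nat set"
  assumes fin: "finite I" and apos0: "\<forall>l\<in>I. a l \<ge> 0" and X: "X \<ge> 0"
    and hb0: "\<forall>l\<in>I. cmod (deriv (T l) z) \<le> X * cmod (T l z)"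
  defines "F \<equiv> (\<lambda>w. \<Sum>l\<in>I. a l * (cmod (T l w))^2)"
  defines "N \<equiv> (\<lambda>e w. \<Sum>l\<in>I. a l * (2 * Re (cnj (T l w) * (deriv (T l) w * e))))"
  defines "N2 \<equiv> (\<lambda>e h w. \<Sum>l\<in>I. a l * (2 * Re (cnj (T l w) * (deriv (deriv (T l)) w * h * e)
                + cnj (deriv (T l) w * h) * (deriv (T l) w * e))))"
  assumes Fp: "F z > 0"
  shows "\<bar>((N2 1 1 z + N2 \<i> \<i> z) * inverse (F z) - (N 1 z * (inverse (F z) * N 1 z * inverse (F z)))
       - (N \<i> z * (inverse (F z) * N \<i> z * inverse (F z)))) / 4\<bar> \<le> 3 * X^2"
proof -
  note apos = apos0[rule_format] and hb = hb0[rule_format]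
  have Nb: "\<bar>N e z\<bar> \<le> 2 * X * F z" if e: "cmod e = 1" for e
  proof -
    have "\<bar>N e z\<bar> \<le> (\<Sum>l\<in>I. \<bar>a l * (2 * Re (cnj (T l z) * (deriv (T l) z * e)))\<bar>)"
      unfolding N_def by (rule sum_abs)
    also have "\<dots> \<le> (\<Sum>l\<in>I. 2 * X * (a l * (cmod (T l z))^2))"
    proof (rule sum_mono)
      fix l assume l: "l \<in> I"
      have "\<bar>Re (cnj (T l z) * (deriv (T l) z * e))\<bar> \<le> cmod (cnj (T l z) * (deriv (T l) z * e))"
        by (rule abs_Re_le_cmod)
      also have "\<dots> = cmod (T l z) * cmod (deriv (T l) z)" using e by (simp add: norm_mult)
      also have "\<dots> \<le> cmod (T l z) * (X * cmod (T l z))" using hb[OF l] by (intro mult_left_mono) auto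
      finally have r: "\<bar>Re (cnj (T l z) * (deriv (T l) z * e))\<bar> \<le> X * (cmod (T l z))^2"
        by (simp add: power2_eq_square mult_ac)
      have gen: "\<And>R::real. \<bar>a l * (2 * R)\<bar> = a l * 2 * \<bar>R\<bar>" using apos[OF l] by (simp add: abs_mult)
      have "\<bar>a l * (2 * Re (cnj (T l z) * (deriv (T l) z * e)))\<bar> = a l * 2 * \<bar>Re (cnj (T l z) * (deriv (T l) z * e))\<bar>"
        by (rule gen)
      also have "\<dots> \<le> a l * 2 * (X * (cmod (T l z))^2)" using apos[OF l] r by (intro mult_left_mono) auto
      finally show "\<bar>a l * (2 * Re (cnj (T l z) * (deriv (T l) z * e)))\<bar> \<le> 2 * X * (a l * (cmod (T l z))^2)"
        by (simp add: mult_ac)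
    qed
    also have "\<dots> = 2 * X * F z" unfolding F_def by (simp add: sum_distrib_left)
    finally show ?thesis .
  qed
  have tm: "Re (cnj (T l z) * (deriv (deriv (T l)) z * 1 * 1) + cnj (deriv (T l) z * 1) * (deriv (T l) z * 1))
      + Re (cnj (T l z) * (deriv (deriv (T l)) z * \<i> * \<i>) + cnj (deriv (T l) z * \<i>) * (deriv (T l) z * \<i>))
      = 2 * (cmod (deriv (T l) z))^2" for l
    by (simp add: cmod_power2 algebra_simps power2_eq_square[of "Re _"] power2_eq_square[of "Im _"])
  have S2: "N2 1 1 z + N2 \<i> \<i> z = (\<Sum>l\<in>I. a l * (4 * (cmod (deriv (T l) z))^2))"
    unfolding N2_def sum.distrib[symmetric]
    by (rule sum.cong[OF refl]) (use tm in \<open>simp add: algebra_simps\<close>)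
  have S2b: "N2 1 1 z + N2 \<i> \<i> z \<le> 4 * X^2 * F z"
  proof -
    have "(\<Sum>l\<in>I. a l * (4 * (cmod (deriv (T l) z))^2)) \<le> (\<Sum>l\<in>I. 4 * X^2 * (a l * (cmod (T l z))^2))"
    proof (rule sum_mono)
      fix l assume l: "l \<in> I"
      have "(cmod (deriv (T l) z))^2 \<le> (X * cmod (T l z))^2" using hb[OF l] by (intro power_mono) auto
      thus "a l * (4 * (cmod (deriv (T l) z))^2) \<le> 4 * X^2 * (a l * (cmod (T l z))^2)"
        using apos[OF l] by (simp add: power_mult_distrib mult_left_mono mult_ac)
    qed
    thus ?thesis unfolding S2 F_def by (simp add: sum_distrib_left)
  qed
  have S2p: "N2 1 1 z + N2 \<i> \<i> z \<ge> 0" unfolding S2 using apos by (intro sum_nonneg) auto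
  define s where "s = (N2 1 1 z + N2 \<i> \<i> z) / F z"
  define t1 where "t1 = N 1 z / F z"
  define t2 where "t2 = N \<i> z / F z"
  have s: "0 \<le> s" "s \<le> 4 * X^2" using S2b S2p Fp by (auto simp: s_def divide_simps)
  have "\<bar>t1\<bar> \<le> 2 * X" using Nb[of 1] Fp by (auto simp: t1_def abs_div divide_simps)
  hence t1: "t1^2 \<le> 4 * X^2" using power_mono[of "\<bar>t1\<bar>" "2*X" 2] by (simp add: power_mult_distrib)
  have "\<bar>t2\<bar> \<le> 2 * X" using Nb[of \<i>] Fp by (auto simp: t2_def abs_div divide_simps)
  hence t2: "t2^2 \<le> 4 * X^2" using power_mono[of "\<bar>t2\<bar>" "2*X" 2] by (simp add: power_mult_distrib)
  have eq: "((N2 1 1 z + N2 \<i> \<i> z) * inverse (F z) - (N 1 z * (inverse (F z) * N 1 z * inverse (F z)))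
       - (N \<i> z * (inverse (F z) * N \<i> z * inverse (F z)))) / 4 = (s - t1^2 - t2^2) / 4"
    by (simp add: s_def t1_def t2_def field_simps power2_eq_square)
  have p: "t1^2 \<ge> 0" "t2^2 \<ge> 0" "X^2 \<ge> 0" by simp_all
  show ?thesis unfolding eq by (rule aux_bound[OF s t1 t2 p(1,2)])
qed

theorem lemma2:
  fixes T :: "nat \<Rightarrow> complex \<Rightarrow> complex" and q :: "nat \<Rightarrow> real" and M :: nat
    and r :: real
  assumes r_pos: "r > 0"
    and holo: "\<And>l. l \<in> {1..M} \<Longrightarrow> T l holomorphic_on ball 0 r"
    and nonzero: "\<exists>l\<in>{1..M}. \<exists>z\<in>ball 0 r. T l z \<noteq> 0"
  shows "\<exists>U C. open U \<and> 0 \<in> U \<and>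
           (\<forall>z\<in>U - {0}. \<forall>\<epsilon>::real. \<epsilon> > 0 \<longrightarrow>
              \<bar>ddbar (\<lambda>w. ln (\<Sum>l=1..M. \<epsilon> powr (2 * q l) * (cmod (T l w))\<^sup>2)) z\<bar>
                \<le> C / (cmod z)\<^sup>2)"
proof -
  define P where "P l \<delta> K \<longleftrightarrow> 0 < \<delta> \<and> \<delta> \<le> r \<and> K \<ge> 0 \<and>
     (\<forall>w\<in>ball 0 \<delta>. cmod w * cmod (deriv (T l) w) \<le> K * cmod (T l w)) \<and>
     ((\<exists>z\<in>ball 0 r. T l z \<noteq> 0) \<longrightarrow> (\<forall>w\<in>ball 0 \<delta> - {0}. T l w \<noteq> 0))" for l \<delta> K
  have "\<forall>l\<in>{1..M}. \<exists>p. P l (fst p) (snd p)"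
  proof
    fix l assume l: "l \<in> {1..M}"
    from key[OF r_pos holo[OF l]] obtain \<delta> K where "P l \<delta> K" unfolding P_def by blast
    thus "\<exists>p. P l (fst p) (snd p)" by (intro exI[of _ "(\<delta>, K)"]) simp
  qed
  then obtain pf where pf: "\<And>l. l \<in> {1..M} \<Longrightarrow> P l (fst (pf l)) (snd (pf l))"
    using bchoice by metis
  define \<delta> where "\<delta> = Min ((\<lambda>l. fst (pf l)) ` {1..M})"
  define K where "K = (\<Sum>l=1..M. snd (pf l))"
  obtain l0 z0 where l0: "l0 \<in> {1..M}" and z0: "z0 \<in> ball 0 r" "T l0 z0 \<noteq> 0" using nonzero by blast
  have ne: "{1..M} \<noteq> {}" using l0 by auto
  have \<delta>pos: "\<delta> > 0" unfolding \<delta>_def using pf ne by (subst Min_gr_iff) (auto simp: P_def)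
  have \<delta>le: "\<delta> \<le> fst (pf l)" if "l \<in> {1..M}" for l unfolding \<delta>_def using that by (intro Min_le) auto
  have Kge: "snd (pf l) \<le> K" if "l \<in> {1..M}" for l
    unfolding K_def using that pf by (intro member_le_sum) (auto simp: P_def)
  have K0: "K \<ge> 0" unfolding K_def using pf by (intro sum_nonneg) (auto simp: P_def)
  have \<delta>r: "\<delta> \<le> r" using \<delta>le[OF l0] pf[OF l0] by (auto simp: P_def)
  define V where "V = ball (0::complex) \<delta> - {0}"
  have Vo: "open V" unfolding V_def by (intro open_Diff) auto
  have VS: "V \<subseteq> ball 0 r" using \<delta>r by (auto simp: V_def)
  show ?thesis
  proof (intro exI[of _ "ball 0 \<delta>"] exI[of _ "3 * K^2"] conjI ballI allI impI)
    show "open (ball (0::complex) \<delta>)" by simp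
    show "(0::complex) \<in> ball 0 \<delta>" using \<delta>pos by simp
    fix z :: complex and \<epsilon> :: real
    assume z: "z \<in> ball 0 \<delta> - {0}" and \<epsilon>: "\<epsilon> > 0"
    have zV: "z \<in> V" using z by (simp add: V_def)
    define a where "a l = \<epsilon> powr (2 * q l)" for l
    have apos: "a l > 0" for l using \<epsilon> by (simp add: a_def)
    have Fpos: "(\<Sum>l\<in>{1..M}. a l * (cmod (T l w))^2) > 0" if w: "w \<in> V" for w
    proof (rule sum_pos2[OF _ l0])
      have "w \<in> ball 0 (fst (pf l0)) - {0}" using w \<delta>le[OF l0] by (auto simp: V_def)
      hence "T l0 w \<noteq> 0" using pf[OF l0] z0 by (auto simp: P_def)
      thus "0 < a l0 * (cmod (T l0 w))\<^sup>2" using apos[of l0] by simp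
      show "\<And>i. i \<in> {1..M} \<Longrightarrow> 0 \<le> a i * (cmod (T i w))\<^sup>2" using apos by (simp add: less_imp_le)
    qed simp
    have s: "cmod z > 0" using z by auto
    have hb: "cmod (deriv (T l) z) \<le> (K / cmod z) * cmod (T l z)" if l: "l \<in> {1..M}" for l
    proof -
      have "z \<in> ball 0 (fst (pf l))" using z \<delta>le[OF l] by auto
      hence "cmod z * cmod (deriv (T l) z) \<le> snd (pf l) * cmod (T l z)" using pf[OF l] by (auto simp: P_def)
      also have "\<dots> \<le> K * cmod (T l z)" using Kge[OF l] by (intro mult_right_mono) auto
      finally show ?thesis using s by (simp add: field_simps)
    qed
    have fin: "finite {1..M}" by simp
    have holo': "\<forall>l\<in>{1..M}. T l holomorphic_on ball 0 r" using holo by blast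
    have Fpos': "\<forall>w\<in>V. (\<Sum>l\<in>{1..M}. a l * (cmod (T l w))^2) > 0" using Fpos by blast
    have apos': "\<forall>l\<in>{1..M}. a l \<ge> 0" using apos by (simp add: less_imp_le)
    have hb': "\<forall>l\<in>{1..M}. cmod (deriv (T l) z) \<le> (K / cmod z) * cmod (T l z)" using hb by blast
    note eq = calc[OF Vo zV open_ball VS holo' Fpos']
    have X0: "K / cmod z \<ge> 0" using K0 s by simp
    note bd = final_bound[where I="{1..M}" and a=a and X="K / cmod z" and T=T and z=z,
       OF fin apos' X0 hb' Fpos[OF zV]]
    have "\<bar>ddbar (\<lambda>w. ln (\<Sum>l=1..M. \<epsilon> powr (2 * q l) * (cmod (T l w))\<^sup>2)) z\<bar>
        = \<bar>ddbar (\<lambda>w. ln (\<Sum>l\<in>{1..M}. a l * (cmod (T l w))^2)) z\<bar>" unfolding a_def by (rule refl)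
    also have "\<dots> \<le> 3 * (K / cmod z)^2"  unfolding eq by (rule bd)
    also have "\<dots> = 3 * K^2 / (cmod z)^2" by (simp add: power_divide)
    finally show "\<bar>ddbar (\<lambda>w. ln (\<Sum>l=1..M. \<epsilon> powr (2 * q l) * (cmod (T l w))\<^sup>2)) z\<bar>
        \<le> 3 * K^2 / (cmod z)^2" .
  qed
qed

end
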